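(* Let $H\in\mathbb{R}^{n_z\times n_z}$ be symmetric positive definite, $F\in\mathbb{R}^{n_x\times n_z}$, $G\in\mathbb{R}^{n_c\times n_z}$, $S\in\mathbb{R}^{n_c\times n_x}$, $w\in\mathbb{R}^{n_c}$, and assume $\{z: Gz\le Sx+w\}\neq\emptyset$ for every $x\in\mathbb{R}^{n_x}$. Assume LICQ: for every $x\in\mathbb{R}^{n_x}$, the rows $\{G_j: j\in\mathbb{A}(x)\}$ are linearly independent. Let $\kappa$ be a global Lipschitz constant, let $\hat{x}^1,\dots,\hat{x}^q\in\mathbb{R}^{n_x}$ and $x\in\mathbb{R}^{n_x}$. Define index sets recursively by $\mathbb{I}_0=\{1,\dots,n_c\}$ and, for $k=1,\dots,q$, $$\mathbb{T}_k=\big\{j\in\mathbb{A}^c(\hat{x}^k)\cap\mathbb{I}_{k-1} : \mathcal{B}(z^*(\hat{x}^k),\kappa\|x-\hat{x}^k\|)\not\subseteq\mathcal{Z}_j(x)\big\},\qquad \mathbb{I}_k=\big(\mathbb{A}(\hat{x}^k)\cap\mathbb{I}_{k-1}\big)\cup\mathbb{T}_k,$$ and set $\mathbb{I}(x)=\mathbb{I}_q$. Then $z^*(x,\mathbb{I}(x))=z^*(x)$.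
   Context: For a parameter $x$, mp-QP$(x)$ is: minimize $V(z)=\frac12 z^THz+x^TFz$ over $z\in\mathcal{Z}(x)=\{z\in\mathbb{R}^{n_z}: Gz\le Sx+w\}$. $G_j,S_j$ are the $j$-th rows of $G,S$, $w_j$ the $j$-th entry of $w$, $\mathcal{Z}_j(x)=\{z: G_jz\le S_jx+w_j\}$. For $\mathbb{I}\subseteq\{1,\dots,n_c\}$, $\mathcal{Z}(x,\mathbb{I})=\bigcap_{j\in\mathbb{I}}\mathcal{Z}_j(x)$ ($=\mathbb{R}^{n_z}$ if $\mathbb{I}=\emptyset$) and $z^*(x,\mathbb{I})$ is the unique minimizer of $V$ over $\mathcal{Z}(x,\mathbb{I})$; $z^*(x)=z^*(x,\{1,\dots,n_c\})$. Active set $\mathbb{A}(x)=\{j: G_jz^*(x)=S_jx+w_j\}$, inactive set $\mathbb{A}^c(x)=\{j: G_jz^*(x)<S_jx+w_j\}$. A global Lipschitz constant is $\kappa\in\mathbb{R}$ with $\|z^*(x_1,\mathbb{I})-z^*(x_2,\mathbb{I})\|\le\kappa\|x_1-x_2\|$ for all $x_1,x_2$ and all $\mathbb{I}\subseteq\{1,\dots,n_c\}$. $\mathcal{B}(q,r)$ is the closed Euclidean ball. For $G_j\ne0$, the condition $\mathcal{B}(z^*(\hat x^k),\kappa\|x-\hat x^k\|)\not\subseteq\mathcal{Z}_j(x)$ is equivalent to $\kappa\|x-\hat{x}^k\|>\frac{w_j+S_jx-G_jz^*(\hat{x}^k)}{\|G_j\|}$, which is how the paper's Algorithm 2 writes it.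 *)

theory Defs
  imports "HOL-Analysis.Analysis"
begin

text \<open>Decision variable z :: real^'z (n_z = CARD('z)), parameter
 x :: real^'x (n_x = CARD('x)). The n_c constraints are indexed by j < nc;
 G j, S j are the j-th rows of G, S and w j the j-th entry of w.
 H :: real^'z^'z, F :: real^'z^'x (an n_x by n_z matrix), so x^T F z = x \<bullet> (F *v z).\<close>

definition V :: "real^'z^'z \<Rightarrow> real^'z^'x \<Rightarrow> real^'x \<Rightarrow> real^'z \<Rightarrow> real" where
  "V H F x z = (1/2) * (z \<bullet> (H *v z)) + x \<bullet> (F *v z)"

definition Zj :: "(nat \<Rightarrow> real^'z) \<Rightarrow> (nat \<Rightarrow> real^'x) \<Rightarrow> (nat \<Rightarrow> real)
    \<Rightarrow> real^'x \<Rightarrow> nat \<Rightarrow> (real^'z) set" where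
  "Zj G S w x j = {z. G j \<bullet> z \<le> S j \<bullet> x + w j}"

definition ZI :: "(nat \<Rightarrow> real^'z) \<Rightarrow> (nat \<Rightarrow> real^'x) \<Rightarrow> (nat \<Rightarrow> real)
    \<Rightarrow> real^'x \<Rightarrow> nat set \<Rightarrow> (real^'z) set" where
  "ZI G S w x I = (\<Inter>j\<in>I. Zj G S w x j)"

definition zstarI :: "real^'z^'z \<Rightarrow> real^'z^'x \<Rightarrow> (nat \<Rightarrow> real^'z) \<Rightarrow> (nat \<Rightarrow> real^'x)
    \<Rightarrow> (nat \<Rightarrow> real) \<Rightarrow> real^'x \<Rightarrow> nat set \<Rightarrow> real^'z" where
  "zstarI H F G S w x I =
     (THE z. z \<in> ZI G S w x I \<and> (\<forall>y\<in>ZI G S w x I. V H F x z \<le> V H F x y))"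

definition zstar :: "real^'z^'z \<Rightarrow> real^'z^'x \<Rightarrow> (nat \<Rightarrow> real^'z) \<Rightarrow> (nat \<Rightarrow> real^'x)
    \<Rightarrow> (nat \<Rightarrow> real) \<Rightarrow> nat \<Rightarrow> real^'x \<Rightarrow> real^'z" where
  "zstar H F G S w nc x = zstarI H F G S w x {..<nc}"

definition active_set :: "real^'z^'z \<Rightarrow> real^'z^'x \<Rightarrow> (nat \<Rightarrow> real^'z) \<Rightarrow> (nat \<Rightarrow> real^'x)
    \<Rightarrow> (nat \<Rightarrow> real) \<Rightarrow> nat \<Rightarrow> real^'x \<Rightarrow> nat set" where
  "active_set H F G S w nc x =
     {j. j < nc \<and> G j \<bullet> zstar H F G S w nc x = S j \<bullet> x + w j}"

definition inactive_set :: "real^'z^'z \<Rightarrow> real^'z^'x \<Rightarrow> (nat \<Rightarrow> real^'z) \<Rightarrow> (nat \<Rightarrow> real^'x)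
    \<Rightarrow> (nat \<Rightarrow> real) \<Rightarrow> nat \<Rightarrow> real^'x \<Rightarrow> nat set" where
  "inactive_set H F G S w nc x =
     {j. j < nc \<and> G j \<bullet> zstar H F G S w nc x < S j \<bullet> x + w j}"

definition sym_pos_def :: "real^'z^'z \<Rightarrow> bool" where
  "sym_pos_def H \<longleftrightarrow> transpose H = H \<and> (\<forall>z. z \<noteq> 0 \<longrightarrow> z \<bullet> (H *v z) > 0)"

definition global_lipschitz :: "real^'z^'z \<Rightarrow> real^'z^'x \<Rightarrow> (nat \<Rightarrow> real^'z) \<Rightarrow> (nat \<Rightarrow> real^'x)
    \<Rightarrow> (nat \<Rightarrow> real) \<Rightarrow> nat \<Rightarrow> real \<Rightarrow> bool" where
  "global_lipschitz H F G S w nc \<kappa> \<longleftrightarrow>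
     (\<forall>x1 x2 I. I \<subseteq> {..<nc} \<longrightarrow>
        norm (zstarI H F G S w x1 I - zstarI H F G S w x2 I) \<le> \<kappa> * norm (x1 - x2))"

definition rows_lin_indep :: "(nat \<Rightarrow> real^'z) \<Rightarrow> nat set \<Rightarrow> bool" where
  "rows_lin_indep G A \<longleftrightarrow> inj_on G A \<and> independent (G ` A)"

primrec Iset :: "real^'z^'z \<Rightarrow> real^'z^'x \<Rightarrow> (nat \<Rightarrow> real^'z) \<Rightarrow> (nat \<Rightarrow> real^'x)
    \<Rightarrow> (nat \<Rightarrow> real) \<Rightarrow> nat \<Rightarrow> real \<Rightarrow> (nat \<Rightarrow> real^'x) \<Rightarrow> real^'x \<Rightarrow> nat \<Rightarrow> nat set" where
  "Iset H F G S w nc \<kappa> xh x 0 = {..<nc}"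
| "Iset H F G S w nc \<kappa> xh x (Suc k) =
     (active_set H F G S w nc (xh (Suc k)) \<inter> Iset H F G S w nc \<kappa> xh x k) \<union>
     {j \<in> inactive_set H F G S w nc (xh (Suc k)) \<inter> Iset H F G S w nc \<kappa> xh x k.
        \<not> cball (zstar H F G S w nc (xh (Suc k))) (\<kappa> * norm (x - xh (Suc k)))
            \<subseteq> Zj G S w x j}"

end

theory Submission
  imports Defs
begin

definition dV :: "real^'z^'z \<Rightarrow> real^'z^'x \<Rightarrow> real^'x \<Rightarrow> real^'z \<Rightarrow> real^'z \<Rightarrow> real" where
  "dV H F x z h = (1/2) * (z \<bullet> (H *v h)) + (1/2) * (h \<bullet> (H *v z)) + x \<bullet> (F *v h)"
lemma V_expand:
  "V H F x (z + t *\<^sub>R h) = V H F x z + t * dV H F x z h + (t^2/2) * (h \<bullet> (H *v h))"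
  unfolding V_def dV_def
  by (simp add: matrix_vector_right_distrib matrix_vector_mult_scaleR inner_add_left
      inner_add_right  power2_eq_square field_simps)

lemma dV_add: "dV H F x z (a + b) = dV H F x z a + dV H F x z b"
  unfolding dV_def
  by (simp add: matrix_vector_right_distrib inner_add_left inner_add_right field_simps)

lemma dV_scale: "dV H F x z (c *\<^sub>R a) = c * dV H F x z a"
  unfolding dV_def
  by (simp add: matrix_vector_mult_scaleR field_simps)

lemma dV_minus: "dV H F x z (- a) = - dV H F x z a"
  using dV_scale[of H F x z "-1" a] by simp

lemma dV_diff: "dV H F x z (a - b) = dV H F x z a - dV H F x z b"
  using dV_add[of H F x z a "-b"] dV_minus[of H F x z b] by simp

lemma first_order:
  fixes K :: "(real^'z) set"
  assumes zK: "z \<in> K" and zmin: "\<forall>y\<in>K. V H F x z \<le> V H F x y"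
    and hpos: "h \<bullet> (H *v h) \<ge> 0"
    and ev: "eventually (\<lambda>t. z + t *\<^sub>R h \<in> K) (at_right 0)"
  shows "dV H F x z h \<ge> 0"
proof (rule ccontr)
  assume "\<not> ?thesis"
  then have D0: "dV H F x z h < 0" by simp
  define q where "q = h \<bullet> (H *v h)"
  define D where "D = dV H F x z h"
  from ev obtain b where b: "b > 0" "\<And>t. t > 0 \<Longrightarrow> t < b \<Longrightarrow> z + t *\<^sub>R h \<in> K"
    unfolding eventually_at_right_field by auto
  define c where "c = - D / (q + 1)"
  have qpos: "q \<ge> 0" using hpos q_def by simp
  have D: "D < 0" using D0 D_def by simp
  have c: "c > 0" using D qpos unfolding c_def by (simp add: field_simps)
  define t where "t = min (b/2) (c/2)"
  have t: "t > 0" "t < b" "t < c" using b c unfolding t_def by auto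
  have "z + t *\<^sub>R h \<in> K" using b t by auto
  then have "V H F x z \<le> V H F x (z + t *\<^sub>R h)" using zmin by auto
  then have le: "0 \<le> t * D + (t^2/2) * q" unfolding V_expand D_def q_def by simp
  have "t * (q + 1) < - D" using t(3) qpos unfolding c_def by (simp add: field_simps)
  moreover have "t * (q + 1) = t * q + t" by (simp add: algebra_simps)
  ultimately have tq: "t * q < - D" using t(1) by linarith
  have "(t^2/2) * q = (t/2) * (t * q)" by (simp add: power2_eq_square)
  also have "\<dots> \<le> (t/2) * (- D)" using tq t(1) by (intro mult_left_mono) auto
  finally have X: "(t^2/2) * q \<le> (t/2) * (- D)" .
  have Y: "(t/2) * (- D) = (t/2) * D - t * D" by (simp add: algebra_simps)
  have "(t/2) * D < 0" using t(1) D by (simp add: mult_pos_neg)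
  then show False using le X Y by linarith
qed

definition isMin where
  "isMin H F G S w x I z \<longleftrightarrow> z \<in> ZI G S w x I \<and> (\<forall>y\<in>ZI G S w x I. V H F x z \<le> V H F x y)"

lemma ZI_convex: "convex (ZI G S w x I)"
  unfolding ZI_def Zj_def by (intro convex_INT ballI convex_halfspace_le)

lemma ZI_closed: "closed (ZI G S w x I)"
  unfolding ZI_def Zj_def by (intro closed_INT ballI closed_halfspace_le)

lemma min_unique:
  fixes K :: "(real^'z) set"
  assumes pd: "\<forall>h. h \<noteq> 0 \<longrightarrow> h \<bullet> (H *v h) > 0" and cK: "convex K"
    and z1: "z1 \<in> K" "\<forall>y\<in>K. V H F x z1 \<le> V H F x y"
    and z2: "z2 \<in> K" "\<forall>y\<in>K. V H F x z2 \<le> V H F x y"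
  shows "z1 = z2"
proof (rule ccontr)
  assume ne: "z1 \<noteq> z2"
  define h where "h = z2 - z1"
  have hne: "h \<noteq> 0" using ne h_def by simp
  have q: "h \<bullet> (H *v h) > 0" using pd hne by auto
  have ev: "eventually (\<lambda>t. z1 + t *\<^sub>R h \<in> K) (at_right 0)"
    unfolding eventually_at_right_field
  proof (intro exI[of _ 1] conjI allI impI)
    fix t :: real assume t: "t > 0" "t < 1"
    have "z1 + t *\<^sub>R h = (1 - t) *\<^sub>R z1 + t *\<^sub>R z2" unfolding h_def by (simp add: algebra_simps)
    also have "\<dots> \<in> K" using cK z1(1) z2(1) t by (intro convexD) auto
    finally show "z1 + t *\<^sub>R h \<in> K" .
  qed simp
  have "dV H F x z1 h \<ge> 0" using first_order[OF z1 _ ev] q by simp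
  moreover have "V H F x z2 = V H F x z1 + dV H F x z1 h + (1/2) * (h \<bullet> (H *v h))"
    using V_expand[of H F x z1 1 h] unfolding h_def by simp
  ultimately have "V H F x z2 > V H F x z1" using q by simp
  with z2(2) z1(1) show False by force
qed

lemma zstarI_eq:
  assumes pd: "\<forall>h. h \<noteq> 0 \<longrightarrow> h \<bullet> (H *v h) > 0" and m: "isMin H F G S w x I z"
  shows "zstarI H F G S w x I = z"
  unfolding zstarI_def
proof (rule the_equality)
  show "z \<in> ZI G S w x I \<and> (\<forall>y\<in>ZI G S w x I. V H F x z \<le> V H F x y)" using m unfolding isMin_def by auto
  fix z' assume "z' \<in> ZI G S w x I \<and> (\<forall>y\<in>ZI G S w x I. V H F x z' \<le> V H F x y)"
  then show "z' = z" using min_unique[OF pd ZI_convex] m unfolding isMin_def by blast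
qed

lemma pd_lower:
  fixes H :: "real^'z^'z"
  assumes pd: "\<forall>h. h \<noteq> 0 \<longrightarrow> h \<bullet> (H *v h) > 0"
  shows "\<exists>lam>0. \<forall>h. lam * (norm h)^2 \<le> h \<bullet> (H *v h)"
proof -
  have cH: "continuous_on UNIV ((*v) H)" by (rule linear_continuous_on) simp
  have cont: "continuous_on (sphere 0 1) (\<lambda>h. h \<bullet> (H *v h))"
    by (intro continuous_on_inner continuous_on_id continuous_on_subset[OF cH]) auto
  obtain b :: "real^'z" where b: "b \<in> Basis" using nonempty_Basis by blast
  have "b \<in> sphere 0 1" using b by simp
  then obtain u where u: "u \<in> sphere 0 1" "\<forall>y\<in>sphere 0 1. u \<bullet> (H *v u) \<le> y \<bullet> (H *v y)"
    using continuous_attains_inf[OF compact_sphere _ cont] by blast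
  have "u \<noteq> 0" using u(1) by auto
  then have lam: "u \<bullet> (H *v u) > 0" using pd by auto
  show ?thesis
  proof (intro exI[of _ "u \<bullet> (H *v u)"] conjI allI lam)
    fix h :: "real^'z"
    show "(u \<bullet> (H *v u)) * (norm h)^2 \<le> h \<bullet> (H *v h)"
    proof (cases "h = 0")
      case True then show ?thesis by simp
    next
      case False
      define v where "v = (1 / norm h) *\<^sub>R h"
      have v1: "v \<in> sphere 0 1" using False by (simp add: v_def)
      have hv: "h = norm h *\<^sub>R v" using False by (simp add: v_def)
      have "h \<bullet> (H *v h) = (norm h)^2 * (v \<bullet> (H *v v))"
        by (subst (1 2) hv) (simp add: matrix_vector_mult_scaleR power2_eq_square)
      moreover have "u \<bullet> (H *v u) \<le> v \<bullet> (H *v v)" using u(2) v1 by auto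
      ultimately show ?thesis by (metis mult.commute mult_right_mono zero_le_power2)
    qed
  qed
qed

lemma V_cont: "continuous_on UNIV (V H F x)"
proof -
  have cH: "continuous_on UNIV ((*v) H)" by (rule linear_continuous_on) simp
  have cF: "continuous_on UNIV ((*v) F)" by (rule linear_continuous_on) simp
  have "continuous_on UNIV (\<lambda>z. (1/2) * (z \<bullet> (H *v z)) + x \<bullet> (F *v z))"
    by (intro continuous_intros cH cF)
  then show ?thesis unfolding V_def[abs_def] by simp
qed

lemma min_exists:
  fixes H :: "real^'z^'z"
  assumes pd: "\<forall>h. h \<noteq> 0 \<longrightarrow> h \<bullet> (H *v h) > 0" and ne: "ZI G S w x I \<noteq> {}"
  shows "\<exists>z. isMin H F G S w x I z"
proof -
  define K where "K = ZI G S w x I"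
  obtain lam where lam: "lam > 0" "\<And>h. lam * (norm h)^2 \<le> h \<bullet> (H *v h)"
    using pd_lower[OF pd] by blast
  obtain M where M: "\<And>z. norm (F *v z) \<le> norm z * M"
    using bounded_linear.bounded[OF matrix_vector_mul_bounded_linear[of F]] by blast
  define C where "C = norm x * M"
  have low: "V H F x z \<ge> lam / 2 * (norm z)^2 - C * norm z" for z
  proof -
    have "x \<bullet> (F *v z) \<ge> - (norm x * norm (F *v z))"
      using norm_cauchy_schwarz[of "-x" "F *v z"] by simp
    moreover have "norm x * norm (F *v z) \<le> norm x * (norm z * M)"
      using M by (simp add: mult_left_mono)
    ultimately have "x \<bullet> (F *v z) \<ge> - (C * norm z)" unfolding C_def by (simp add: algebra_simps)
    moreover have "z \<bullet> (H *v z) \<ge> lam * (norm z)^2" using lam(2) by simp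
    ultimately show ?thesis unfolding V_def by simp
  qed
  obtain p where p: "p \<in> K" using ne K_def by blast
  define L where "L = K \<inter> {z. V H F x z \<le> V H F x p}"
  define R where "R = max 1 (2 * (C + \<bar>V H F x p\<bar>) / lam)"
  have bnd: "norm z \<le> R" if "z \<in> L" for z
  proof (rule ccontr)
    assume "\<not> norm z \<le> R"
    then have r: "norm z > R" by simp
    define r where "r = norm z"
    have r1: "r \<ge> 1" using r unfolding R_def r_def by simp
    have "r > 2 * (C + \<bar>V H F x p\<bar>) / lam" using r unfolding R_def r_def by simp
    then have "lam * r > 2 * (C + \<bar>V H F x p\<bar>)" using lam(1) by (simp add: field_simps)
    then have a: "lam / 2 * r - C > \<bar>V H F x p\<bar>" by simp
    have "r * (lam / 2 * r - C) \<ge> 1 * (lam / 2 * r - C)"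
      using r1 a by (intro mult_right_mono) auto
    then have "lam / 2 * r^2 - C * r > V H F x p" using a
      by (simp add: power2_eq_square algebra_simps)
    moreover have "V H F x z \<le> V H F x p" using that L_def by simp
    ultimately show False using low[of z] unfolding r_def by simp
  qed
  have cL: "compact L"
    unfolding compact_eq_bounded_closed
  proof
    show "bounded L" unfolding bounded_iff using bnd by blast
    show "closed L" unfolding L_def K_def
      by (intro closed_Int ZI_closed closed_Collect_le V_cont continuous_on_const)
  qed
  have pL: "p \<in> L" using p L_def by simp
  obtain z where z: "z \<in> L" "\<forall>y\<in>L. V H F x z \<le> V H F x y"
    using continuous_attains_inf[OF cL _ continuous_on_subset[OF V_cont]] pL by blast
  have "isMin H F G S w x I z"
    unfolding isMin_def
  proof
    show "z \<in> ZI G S w x I" using z(1) L_def K_def by simp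
    show "\<forall>y\<in>ZI G S w x I. V H F x z \<le> V H F x y"
    proof
      fix y assume y: "y \<in> ZI G S w x I"
      show "V H F x z \<le> V H F x y"
      proof (cases "V H F x y \<le> V H F x p")
        case True then show ?thesis using z(2) y L_def K_def by simp
      next
        case False then show ?thesis using z(2) pL by fastforce
      qed
    qed
  qed
  then show ?thesis by blast
qed



lemma solve_lin:
  fixes G :: "nat \<Rightarrow> real^'z"
  assumes inj: "inj_on G A" and ind: "independent (G ` A)"
  shows "\<exists>e. \<forall>i\<in>A. G i \<bullet> e = c i"
proof -
  have "\<exists>g :: real^'z \<Rightarrow> real. linear g \<and> (\<forall>v\<in>G ` A. g v = c (the_inv_into A G v))"
    by (rule linear_independent_extend[OF ind])
  then obtain g :: "real^'z \<Rightarrow> real" where g: "linear g" "\<forall>v\<in>G ` A. g v = c (the_inv_into A G v)"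
    by blast
  define e where "e = (\<Sum>b\<in>Basis. g b *\<^sub>R b)"
  have ge: "G i \<bullet> e = g (G i)" for i
  proof -
    have "g (G i) \<bullet> 1 = (\<Sum>b\<in>Basis. (G i \<bullet> b) * (g b \<bullet> 1))"
      using Linear_Algebra.linear_componentwise[OF g(1), of "G i" 1] by simp
    then have "g (G i) = (\<Sum>b\<in>Basis. (G i \<bullet> b) * g b)" by (simp add: inner_real_def)
    moreover have "G i \<bullet> e = (\<Sum>b\<in>Basis. g b * (G i \<bullet> b))"
      unfolding e_def by (simp add: inner_sum_right)
    ultimately show ?thesis by (simp add: mult.commute)
  qed
  show ?thesis
  proof (intro exI[of _ e] ballI)
    fix i assume i: "i \<in> A"
    then show "G i \<bullet> e = c i" using ge g(2) the_inv_into_f_f[OF inj i] by auto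
  qed
qed

lemma ev_halfspace:
  fixes g v d :: "real^'z"
  assumes "g \<bullet> v \<le> b" and "g \<bullet> v = b \<longrightarrow> g \<bullet> d \<le> 0"
  shows "eventually (\<lambda>t. g \<bullet> (v + t *\<^sub>R d) \<le> b) (at_right 0)"
proof (cases "g \<bullet> v < b")
  case True
  have "((\<lambda>t. g \<bullet> v + t * (g \<bullet> d)) \<longlongrightarrow> g \<bullet> v + 0 * (g \<bullet> d)) (at_right (0::real))"
    by (intro tendsto_intros)
  then have "eventually (\<lambda>t. g \<bullet> v + t * (g \<bullet> d) < b) (at_right (0::real))"
    using True by (intro order_tendstoD(2)) auto
  then show ?thesis
    by eventually_elim (simp add: inner_add_right)
next
  case False
  then have eq: "g \<bullet> v = b" using assms(1) by simp
  then have gd: "g \<bullet> d \<le> 0" using assms(2) by simp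
  show ?thesis unfolding eventually_at_right_field
  proof (intro exI[of _ 1] conjI allI impI)
    fix t :: real assume t: "t > 0" "t < 1"
    have "t * (g \<bullet> d) \<le> 0" using t gd by (simp add: mult_nonneg_nonpos)
    then show "g \<bullet> (v + t *\<^sub>R d) \<le> b" using eq by (simp add: inner_add_right)
  qed simp
qed

lemma ev_in_ZI:
  assumes fin: "finite J" and z0: "z0 \<in> ZI G S w x J"
    and dir: "\<forall>j\<in>J. G j \<bullet> z0 = S j \<bullet> x + w j \<longrightarrow> G j \<bullet> h \<le> 0"
  shows "eventually (\<lambda>t. z0 + t *\<^sub>R h \<in> ZI G S w x J) (at_right 0)"
proof -
  have "\<forall>j\<in>J. eventually (\<lambda>t. G j \<bullet> (z0 + t *\<^sub>R h) \<le> S j \<bullet> x + w j) (at_right 0)"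
  proof
    fix j assume j: "j \<in> J"
    have "G j \<bullet> z0 \<le> S j \<bullet> x + w j" using z0 j unfolding ZI_def Zj_def by auto
    then show "eventually (\<lambda>t. G j \<bullet> (z0 + t *\<^sub>R h) \<le> S j \<bullet> x + w j) (at_right 0)"
      using dir j by (intro ev_halfspace) auto
  qed
  from eventually_ball_finite[OF fin this] show ?thesis
    by eventually_elim (auto simp: ZI_def Zj_def)
qed

lemma ZI_anti: "I \<subseteq> J \<Longrightarrow> ZI G S w x J \<subseteq> ZI G S w x I"
  unfolding ZI_def by auto

lemma local_global:
  assumes hnn: "\<forall>h. h \<bullet> (H *v h) \<ge> 0" and fin: "finite N" and IN: "I \<subseteq> N"
    and vmin: "isMin H F G S w y N v"
    and act: "{j\<in>N. G j \<bullet> v = S j \<bullet> y + w j} \<subseteq> I"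
  shows "isMin H F G S w y I v"
  unfolding isMin_def
proof
  show vI: "v \<in> ZI G S w y I" using vmin ZI_anti[OF IN] unfolding isMin_def by blast
  show "\<forall>u\<in>ZI G S w y I. V H F y v \<le> V H F y u"
  proof
    fix u assume u: "u \<in> ZI G S w y I"
    define d where "d = u - v"
    have "eventually (\<lambda>t. v + t *\<^sub>R d \<in> ZI G S w y N) (at_right 0)"
    proof (rule ev_in_ZI[OF fin])
      show "v \<in> ZI G S w y N" using vmin unfolding isMin_def by blast
      show "\<forall>j\<in>N. G j \<bullet> v = S j \<bullet> y + w j \<longrightarrow> G j \<bullet> d \<le> 0"
      proof (intro ballI impI)
        fix j assume j: "j \<in> N" "G j \<bullet> v = S j \<bullet> y + w j"
        then have "j \<in> I" using act by auto
        then have "G j \<bullet> u \<le> S j \<bullet> y + w j" using u unfolding ZI_def Zj_def by auto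
        then show "G j \<bullet> d \<le> 0" using j(2) unfolding d_def by (simp add: inner_diff_right)
      qed
    qed
    then have "dV H F y v d \<ge> 0"
      using first_order[of v "ZI G S w y N" H F y d] vmin hnn unfolding isMin_def by blast
    moreover have "V H F y u = V H F y v + dV H F y v d + (1/2) * (d \<bullet> (H *v d))"
      using V_expand[of H F y v 1 d] unfolding d_def by simp
    ultimately show "V H F y v \<le> V H F y u" using hnn[rule_format, of d] by simp
  qed
qed



lemma key:
  assumes hnn: "\<forall>h. h \<bullet> (H *v h) \<ge> 0" and fin: "finite N" and sub: "I \<union> B \<union> C \<subseteq> N"
    and BC: "B \<inter> C = {}"
    and m1: "isMin H F G S w x (I \<union> B) z0" and m2: "isMin H F G S w x (I \<union> C) z0"
    and Act: "Act = {i \<in> I \<union> B \<union> C. G i \<bullet> z0 = S i \<bullet> x + w i}"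
    and inj: "inj_on G Act" and ind: "independent (G ` Act)"
  shows "isMin H F G S w x I z0"
  unfolding isMin_def
proof
  show z0I: "z0 \<in> ZI G S w x I" using m1 ZI_anti[of I "I \<union> B"] unfolding isMin_def by blast
  have finB: "finite (I \<union> B)" and finC: "finite (I \<union> C)" using fin sub finite_subset by auto
  have z0B: "z0 \<in> ZI G S w x (I \<union> B)" and z0C: "z0 \<in> ZI G S w x (I \<union> C)"
    using m1 m2 unfolding isMin_def by auto
  have minB: "\<forall>y\<in>ZI G S w x (I \<union> B). V H F x z0 \<le> V H F x y" using m1 unfolding isMin_def by auto
  have minC: "\<forall>y\<in>ZI G S w x (I \<union> C). V H F x z0 \<le> V H F x y" using m2 unfolding isMin_def by auto
  have zeroB: "dV H F x z0 h = 0"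
    if "\<forall>i\<in>Act. i \<in> I \<union> B \<longrightarrow> G i \<bullet> h = 0" for h
  proof -
    have dir: "\<forall>j\<in>I \<union> B. G j \<bullet> z0 = S j \<bullet> x + w j \<longrightarrow> G j \<bullet> k \<le> 0" if "k = h \<or> k = - h" for k
      using that \<open>\<forall>i\<in>Act. i \<in> I \<union> B \<longrightarrow> G i \<bullet> h = 0\<close> unfolding Act by auto
    have "dV H F x z0 h \<ge> 0"
      using first_order[OF z0B minB _ ev_in_ZI[OF finB z0B dir]] hnn by blast
    moreover have "dV H F x z0 (- h) \<ge> 0"
      using first_order[OF z0B minB _ ev_in_ZI[OF finB z0B dir]] hnn by blast
    ultimately show ?thesis by (simp add: dV_minus)
  qed
  have zeroC: "dV H F x z0 h = 0"
    if "\<forall>i\<in>Act. i \<in> I \<union> C \<longrightarrow> G i \<bullet> h = 0" for h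
  proof -
    have dir: "\<forall>j\<in>I \<union> C. G j \<bullet> z0 = S j \<bullet> x + w j \<longrightarrow> G j \<bullet> k \<le> 0" if "k = h \<or> k = - h" for k
      using that \<open>\<forall>i\<in>Act. i \<in> I \<union> C \<longrightarrow> G i \<bullet> h = 0\<close> unfolding Act by auto
    have "dV H F x z0 h \<ge> 0"
      using first_order[OF z0C minC _ ev_in_ZI[OF finC z0C dir]] hnn by blast
    moreover have "dV H F x z0 (- h) \<ge> 0"
      using first_order[OF z0C minC _ ev_in_ZI[OF finC z0C dir]] hnn by blast
    ultimately show ?thesis by (simp add: dV_minus)
  qed
  show "\<forall>y\<in>ZI G S w x I. V H F x z0 \<le> V H F x y"
  proof
    fix y assume y: "y \<in> ZI G S w x I"
    define d where "d = y - z0"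
    obtain e where e: "\<forall>i\<in>Act. G i \<bullet> e = (if i \<in> I then G i \<bullet> d else 0)"
      using solve_lin[OF inj ind, of "\<lambda>i. if i \<in> I then G i \<bullet> d else 0"] by blast
    obtain fB where fB: "\<forall>i\<in>Act. G i \<bullet> fB = (if i \<notin> I \<and> i \<in> B then G i \<bullet> d else 0)"
      using solve_lin[OF inj ind, of "\<lambda>i. if i \<notin> I \<and> i \<in> B then G i \<bullet> d else 0"] by blast
    obtain fC where fC: "\<forall>i\<in>Act. G i \<bullet> fC = (if i \<notin> I \<and> i \<in> C then G i \<bullet> d else 0)"
      using solve_lin[OF inj ind, of "\<lambda>i. if i \<notin> I \<and> i \<in> C then G i \<bullet> d else 0"] by blast
    define f0 where "f0 = d - e - fB - fC"
    have f0: "\<forall>i\<in>Act. G i \<bullet> f0 = 0"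
    proof
      fix i assume i: "i \<in> Act"
      have "i \<in> I \<union> B \<union> C" using i Act by auto
      then show "G i \<bullet> f0 = 0" using e fB fC i BC unfolding f0_def
        by (auto simp: inner_diff_right)
    qed
    have D0: "dV H F x z0 f0 = 0" using zeroB f0 by blast
    have DC: "dV H F x z0 fC = 0"
    proof (rule zeroB)
      show "\<forall>i\<in>Act. i \<in> I \<union> B \<longrightarrow> G i \<bullet> fC = 0" using fC BC by auto
    qed
    have DB: "dV H F x z0 fB = 0"
    proof (rule zeroC)
      show "\<forall>i\<in>Act. i \<in> I \<union> C \<longrightarrow> G i \<bullet> fB = 0" using fB BC by auto
    qed
    have dirE: "\<forall>j\<in>I \<union> B. G j \<bullet> z0 = S j \<bullet> x + w j \<longrightarrow> G j \<bullet> e \<le> 0"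
    proof (intro ballI impI)
      fix j assume j: "j \<in> I \<union> B" "G j \<bullet> z0 = S j \<bullet> x + w j"
      then have jA: "j \<in> Act" using Act by auto
      show "G j \<bullet> e \<le> 0"
      proof (cases "j \<in> I")
        case True
        then have "G j \<bullet> y \<le> S j \<bullet> x + w j" using y unfolding ZI_def Zj_def by auto
        then show ?thesis using e jA True j(2) unfolding d_def by (simp add: inner_diff_right)
      next
        case False then show ?thesis using e jA by simp
      qed
    qed
    have DE: "dV H F x z0 e \<ge> 0"
      using first_order[OF z0B minB _ ev_in_ZI[OF finB z0B dirE]] hnn by blast
    have "d = e + fB + fC + f0" unfolding f0_def by simp
    then have "dV H F x z0 d = dV H F x z0 e + dV H F x z0 fB + dV H F x z0 fC + dV H F x z0 f0"
      by (simp add: dV_add)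
    then have Dd: "dV H F x z0 d \<ge> 0" using D0 DC DB DE by simp
    have "V H F x y = V H F x z0 + dV H F x z0 d + (1/2) * (d \<bullet> (H *v d))"
      using V_expand[of H F x z0 1 d] unfolding d_def by simp
    then show "V H F x z0 \<le> V H F x y" using Dd hnn[rule_format, of d] by simp
  qed
qed



lemma Iset_sub: "Iset H F G S w nc \<kappa> xh x k \<subseteq> {..<nc}"
  by (induction k) (auto simp: active_set_def inactive_set_def)

theorem theorem2:
  fixes H :: "real^'z^'z" and F :: "real^'z^'x"
    and G :: "nat \<Rightarrow> real^'z" and S :: "nat \<Rightarrow> real^'x" and w :: "nat \<Rightarrow> real"
    and nc :: nat and \<kappa> :: real and q :: nat
    and xh :: "nat \<Rightarrow> real^'x" and x :: "real^'x"
  assumes H_spd: "sym_pos_def H"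
    and feasible: "\<forall>y :: real^'x. ZI G S w y {..<nc} \<noteq> {}"
    and LICQ: "\<forall>y :: real^'x. rows_lin_indep G (active_set H F G S w nc y)"
    and lip: "global_lipschitz H F G S w nc \<kappa>"
  shows "zstarI H F G S w x (Iset H F G S w nc \<kappa> xh x q) = zstar H F G S w nc x"
proof -
  define N where "N = {..<nc}"
  have finN: "finite N" unfolding N_def by simp
  have pd: "\<forall>h. h \<noteq> 0 \<longrightarrow> h \<bullet> (H *v h) > 0" using H_spd unfolding sym_pos_def_def by auto
  have hnn: "\<forall>h. h \<bullet> (H *v h) \<ge> 0"
  proof
    fix h :: "real^'z" show "h \<bullet> (H *v h) \<ge> 0" using pd by (cases "h = 0") force+
  qed
  have zst: "isMin H F G S w y I (zstarI H F G S w y I)" if "I \<subseteq> N" for y I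
  proof -
    have "ZI G S w y N \<subseteq> ZI G S w y I" using that ZI_anti by blast
    then have "ZI G S w y I \<noteq> {}" using feasible N_def by blast
    then obtain z where z: "isMin H F G S w y I z" using min_exists[OF pd] by blast
    then show ?thesis using zstarI_eq[OF pd z] by simp
  qed
  define z0 where "z0 = zstar H F G S w nc x"
  have z0min: "isMin H F G S w x N z0" using zst[of N x] unfolding z0_def zstar_def N_def by simp
  have z0in: "z0 \<in> ZI G S w x N" using z0min unfolding isMin_def by blast
  let ?I = "Iset H F G S w nc \<kappa> xh x"
  have claim: "\<forall>I. ?I k \<subseteq> I \<longrightarrow> I \<subseteq> N \<longrightarrow> isMin H F G S w x I z0" for k
  proof (induction k)
    case 0
    then show ?case using z0min N_def by auto
  next
    case (Suc k)
    show ?case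
    proof (intro allI impI)
      fix I assume I1: "?I (Suc k) \<subseteq> I" and I2: "I \<subseteq> N"
      define xk where "xk = xh (Suc k)"
      define v where "v = zstar H F G S w nc xk"
      define A where "A = active_set H F G S w nc xk"
      define B where "B = ?I k - I"
      define C where "C = A - I"
      have IkN: "?I k \<subseteq> N" using Iset_sub N_def by blast
      have AN: "A \<subseteq> N" unfolding A_def active_set_def N_def by auto
      have IHa: "isMin H F G S w x (I \<union> ?I k) z0" using Suc.IH I2 IkN by auto
      have vmin: "isMin H F G S w xk N v" using zst[of N xk] unfolding v_def zstar_def N_def by simp
      have vin: "v \<in> ZI G S w xk N" using vmin unfolding isMin_def by blast
      have Bprop: "j \<in> inactive_set H F G S w nc xk \<and>
          cball v (\<kappa> * norm (x - xk)) \<subseteq> Zj G S w x j" if j: "j \<in> B" for j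
      proof -
        have jk: "j \<in> ?I k" "j \<notin> I" using j B_def by auto
        have jN: "j \<in> N" using jk IkN by auto
        have jSk: "j \<notin> ?I (Suc k)" using jk I1 by auto
        have "G j \<bullet> v \<le> S j \<bullet> xk + w j" using vin jN unfolding ZI_def Zj_def by auto
        moreover have "j \<notin> A" using jSk jk unfolding A_def xk_def by auto
        ultimately have ina: "j \<in> inactive_set H F G S w nc xk"
          using jN unfolding A_def active_set_def inactive_set_def v_def N_def by auto
        then show ?thesis using jSk jk unfolding xk_def v_def by auto
      qed
      have BC: "B \<inter> C = {}"
      proof -
        have "j \<notin> A" if "j \<in> B" for j
          using Bprop[OF that] unfolding A_def active_set_def inactive_set_def by auto
        then show ?thesis unfolding C_def by auto
      qed
      define Is where "Is = I \<union> A"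
      have IsN: "Is \<subseteq> N" using I2 AN Is_def by auto
      have vIs: "isMin H F G S w xk Is v"
      proof (rule local_global[OF hnn finN IsN vmin])
        show "{j \<in> N. G j \<bullet> v = S j \<bullet> xk + w j} \<subseteq> Is"
          unfolding Is_def A_def active_set_def v_def N_def by auto
      qed
      have zv: "zstarI H F G S w xk Is = v" using zstarI_eq[OF pd vIs] .
      define wI where "wI = zstarI H F G S w x Is"
      have wmin: "isMin H F G S w x Is wI" using zst[OF IsN] unfolding wI_def by simp
      have "norm (zstarI H F G S w xk Is - zstarI H F G S w x Is) \<le> \<kappa> * norm (xk - x)"
        using lip IsN unfolding global_lipschitz_def N_def by blast
      then have "dist v wI \<le> \<kappa> * norm (x - xk)"
        using zv unfolding wI_def dist_norm by (simp add: norm_minus_commute)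
      then have wcb: "wI \<in> cball v (\<kappa> * norm (x - xk))" by simp
      have wB: "wI \<in> Zj G S w x j" if "j \<in> B" for j using Bprop[OF that] wcb by blast
      define J where "J = Is \<union> ?I k"
      have JN: "J \<subseteq> N" using IsN IkN J_def by auto
      have "?I k \<subseteq> Is \<union> B" unfolding Is_def B_def by auto
      then have wJ: "wI \<in> ZI G S w x J"
        using wmin wB unfolding isMin_def J_def ZI_def by auto
      have wJmin: "\<forall>y\<in>ZI G S w x J. V H F x wI \<le> V H F x y"
        using wmin ZI_anti[of Is J] unfolding isMin_def J_def by blast
      have z0J: "z0 \<in> ZI G S w x J" using z0in ZI_anti[OF JN] by blast
      have z0Jmin: "\<forall>y\<in>ZI G S w x J. V H F x z0 \<le> V H F x y"
        using IHa ZI_anti[of "I \<union> ?I k" J] unfolding isMin_def J_def Is_def by blast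
      have "wI = z0" using min_unique[OF pd ZI_convex wJ wJmin z0J z0Jmin] .
      then have m2: "isMin H F G S w x (I \<union> C) z0" using wmin unfolding Is_def C_def
        by (metis Un_Diff_cancel)
      have m1: "isMin H F G S w x (I \<union> B) z0" using IHa unfolding B_def
        by (metis Un_Diff_cancel)
      define Act where "Act = {i \<in> I \<union> B \<union> C. G i \<bullet> z0 = S i \<bullet> x + w i}"
      have ActA: "Act \<subseteq> active_set H F G S w nc x"
        using I2 IkN AN unfolding Act_def active_set_def z0_def B_def C_def N_def by auto
      have li: "rows_lin_indep G (active_set H F G S w nc x)" using LICQ by blast
      have inj: "inj_on G Act" using li ActA inj_on_subset unfolding rows_lin_indep_def by blast
      have ind: "independent (G ` Act)"
        using li ActA unfolding rows_lin_indep_def by (meson image_mono independent_mono)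
      have sub: "I \<union> B \<union> C \<subseteq> N" using I2 IkN AN B_def C_def by auto
      show "isMin H F G S w x I z0"
        by (rule key[OF hnn finN sub BC m1 m2 Act_def inj ind])
    qed
  qed
  have qN: "?I q \<subseteq> N" unfolding N_def by (rule Iset_sub)
  have "isMin H F G S w x (?I q) z0" using claim[of q] qN by blast
  then have "zstarI H F G S w x (?I q) = z0" by (rule zstarI_eq[OF pd])
  then show ?thesis by (simp add: z0_def)
qed


end
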